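(* Let $A$ and $V$ be bounded self-adjoint operators on a Hilbert space $\mathfrak{H}$, $B=A+V$, and let $P$ be an orthogonal projection commuting with $A$. Assume that $PVP=P^\perp VP^\perp=0$, where $P^\perp=I-P$. Denote by $A_0$ and $A_1$ the parts of $A$ in its invariant subspaces $\mathrm{Ran}\,P$ and $\mathrm{Ran}\,P^\perp$, respectively. Then $$\inf A-\delta_V^\ell\le\inf B\le\inf A\quad\text{and}\quad \sup A\le\sup B\le\sup A+\delta_V^r,$$ where $$\delta_V^\ell=\|V\|\tan\Big(\tfrac12\arctan\frac{2\|V\|}{|\inf A_1-\inf A_0|}\Big),\qquad \delta_V^r=\|V\|\tan\Big(\tfrac12\arctan\frac{2\|V\|}{|\sup A_1-\sup A_0|}\Big),$$ with the convention $\arctan(+\infty)=\pi/2$ when $\inf A_1=\inf A_0$ and/or $\sup A_1=\sup A_0$.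
   Context: For a bounded self-adjoint operator $T$, $\inf T$ and $\sup T$ denote the infimum and supremum of $\mathrm{spec}(T)$. *)

theory Defs
  imports "HOL-Analysis.Analysis"
begin

text \<open>Real spectrum of an operator T restricted to an invariant (closed) subspace S:
  the reals lambda for which T - lambda I is not a bijection of S onto S.
  (For bounded operators on a closed subspace of a Hilbert space, bounded inverse is
  automatic by the open mapping theorem.)\<close>
definition spec_on :: "'a::real_normed_vector set \<Rightarrow> ('a \<Rightarrow> 'a) \<Rightarrow> real set" where
  "spec_on S T = {l. \<not> bij_betw (\<lambda>x. T x - l *\<^sub>R x) S S}"

definition spec :: "('a::real_normed_vector \<Rightarrow> 'a) \<Rightarrow> real set" where
  "spec T = spec_on UNIV T"

definition self_adjoint :: "('a::real_inner \<Rightarrow>\<^sub>L 'a) \<Rightarrow> bool" where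
  "self_adjoint T \<longleftrightarrow> (\<forall>x y. inner (T x) y = inner x (T y))"

definition orth_proj :: "('a::real_inner \<Rightarrow>\<^sub>L 'a) \<Rightarrow> bool" where
  "orth_proj P \<longleftrightarrow> self_adjoint P \<and> (\<forall>x. P (P x) = P x)"

definition delta_shift :: "real \<Rightarrow> real \<Rightarrow> real" where
  "delta_shift v d = (if d = 0 then v * tan (pi / 4) else v * tan (arctan (2 * v / \<bar>d\<bar>) / 2))"

end

theory Submission
  imports Defs
begin

lemma delta_eq:
  assumes v: "v \<ge> 0"
  shows "delta_shift v d = (sqrt (d ^ 2 + 4 * v ^ 2) - abs d) / 2"
proof (cases "d = 0")
  case True
  have "sqrt (4 * v ^ 2) = 2 * v" using v by (simp add: real_sqrt_mult)
  then show ?thesis using True by (simp add: delta_shift_def tan_45)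
next
  case False
  define u where "u = 2 * v/abs d"
  have u0: "u \<ge> 0" using v by (simp add: u_def)
  have ht: "tan (arctan u / 2) = u / (1 + sqrt (1 + u ^ 2))"
  proof -
    have "tan (arctan u / 2) = sin (2 * (arctan u / 2)) / (cos (2 * (arctan u / 2)) + 1)"
      by (rule tan_half)
    also have "\<dots> = (u / sqrt (1 + u\<^sup>2)) / (1 / sqrt (1 + u\<^sup>2) + 1)"
      by (simp add: sin_arctan cos_arctan)
    also have "\<dots> = u / (1 + sqrt (1 + u ^ 2))"
    proof -
      have "sqrt (1 + u ^ 2) > 0" by (smt (verit) real_sqrt_gt_zero zero_le_power2)
      then show ?thesis by (simp add: field_simps)
    qed
    finally show ?thesis .
  qed
  have ad: "abs d > 0" using False by simp
  have s: "sqrt (1 + u ^ 2) = sqrt (d ^ 2 + 4 * v ^ 2) / abs d"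
  proof -
    have "1 + u ^ 2 = (d ^ 2 + 4 * v ^ 2) / abs d ^ 2" using ad
      by (simp add: u_def field_simps power2_eq_square)
    then show ?thesis by (simp add: real_sqrt_divide)
  qed
  define r where "r = sqrt (d ^ 2 + 4 * v ^ 2)"
  have r2: "r ^ 2 = d ^ 2 + 4 * v ^ 2" unfolding r_def by simp
  have rd: "r \<ge> abs d" unfolding r_def by (rule real_le_rsqrt) simp
  have "delta_shift v d = v * (u / (1 + r/abs d))"
    using False ht s by (simp add: delta_shift_def u_def r_def)
  also have "\<dots> = 2 * v ^ 2 / (abs d + r)" using ad
    by (simp add: u_def field_simps power2_eq_square)
  also have "\<dots> = (r - abs d) / 2"
  proof -
    have "abs d + r > 0" using ad rd by linarith
    moreover have "2 * (2 * v ^ 2) = (r - abs d) * (abs d + r)"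
      using r2 by (simp add: algebra_simps power2_eq_square)
    ultimately show ?thesis by (simp add: field_simps)
  qed
  finally show ?thesis by (simp add: r_def)
qed

lemma delta_neg: "delta_shift v (-d) = delta_shift v d"
  by (simp add: delta_shift_def)

lemma delta_zero: "delta_shift 0 d = 0"
  by (simp add: delta_shift_def)

lemma quad_ineq:
  fixes a0 a1 s t v w :: real
  assumes "s \<ge> 0" "t \<ge> 0" "v \<ge> 0" "abs w \<le> v * s * t"
  shows "a0 * s ^ 2 + a1 * t ^ 2 + 2 * w \<ge> (min a0 a1 - delta_shift v (a1 - a0)) * (s ^ 2 + t ^ 2)"
proof -
  define d where "d = abs (a1 - a0)"
  define \<delta> where "\<delta> = delta_shift v (a1 - a0)"
  define r where "r = sqrt (d ^ 2 + 4 * v ^ 2)"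
  have de: "\<delta> = (r - d)/2" using delta_eq[OF assms(3)] by (simp add: \<delta>_def r_def d_def)
  have r2: "r ^ 2 = d ^ 2 + 4 * v ^ 2" unfolding r_def by simp
  have rd: "r \<ge> d" unfolding r_def by (rule real_le_rsqrt) simp
  have d0: "d \<ge> 0" by (simp add: d_def)
  have dp: "\<delta> \<ge> 0" using de rd by simp
  have rr: "r = d + 2 * \<delta>" using de by simp
  have prod: "\<delta> * (d + \<delta>) = v ^ 2"
  proof -
    have "(d + 2 * \<delta>) ^ 2 = d ^ 2 + 4 * v ^ 2" using r2 rr by simp
    then show ?thesis by (simp add: algebra_simps power2_eq_square)
  qed
  have key: "\<delta> * s ^ 2 - 2 * v * s * t + (d + \<delta>) * t ^ 2 \<ge> 0" for s t :: real
  proof (cases "\<delta> = 0")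
    case True
    then have "v = 0" using prod by simp
    then show ?thesis using True d0 by simp
  next
    case False
    then have dpos: "\<delta> > 0" using dp by simp
    have e1: "\<delta> * (\<delta> * s ^ 2 - 2 * v * s * t + (d + \<delta>) * t ^ 2)
        = (\<delta> * s) ^ 2 - 2 * (\<delta> * s) * (v * t) + (\<delta> * (d + \<delta>)) * t ^ 2"
      by (simp add: algebra_simps power2_eq_square)
    also have "\<dots> = (\<delta> * s - v * t) ^ 2"
      unfolding prod by (simp add: power2_eq_square algebra_simps)
    finally have "\<delta> * (\<delta> * s ^ 2 - 2 * v * s * t + (d + \<delta>) * t ^ 2) \<ge> 0" by simp
    then show ?thesis using dpos by (simp add: zero_le_mult_iff)
  qed
  have w: "2 * w \<ge> - 2 * v * s * t" using assms(4) by linarith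
  show ?thesis
  proof (cases "a0 \<le> a1")
    case True
    then have m: "min a0 a1 = a0" by simp
    have "a1 * t ^ 2 = a0 * t ^ 2 + d * t ^ 2" using True by (simp add: d_def algebra_simps)
    moreover have "(a0 - \<delta>) * (s ^ 2 + t ^ 2) = a0 * s ^ 2 + a0 * t ^ 2 - \<delta> * s ^ 2 - \<delta> * t ^ 2"
      by (simp add: algebra_simps)
    moreover have "(d + \<delta>) * t ^ 2 = d * t ^ 2 + \<delta> * t ^ 2" by (simp add: algebra_simps)
    ultimately show ?thesis using key[of s t] w unfolding m \<delta>_def[symmetric] by linarith
  next
    case False
    then have m: "min a0 a1 = a1" by simp
    have "a0 * s ^ 2 = a1 * s ^ 2 + d * s ^ 2" using False by (simp add: d_def algebra_simps)
    moreover have "(a1 - \<delta>) * (s ^ 2 + t ^ 2) = a1 * s ^ 2 + a1 * t ^ 2 - \<delta> * s ^ 2 - \<delta> * t ^ 2"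
      by (simp add: algebra_simps)
    moreover have "(d + \<delta>) * s ^ 2 = d * s ^ 2 + \<delta> * s ^ 2" by (simp add: algebra_simps)
    moreover have "v * t * s = v * s * t" by simp
    ultimately show ?thesis using key[of t s] w unfolding m \<delta>_def[symmetric] by linarith
  qed
qed

lemma res_bij:
  fixes T :: "'a::{real_inner,complete_space} \<Rightarrow>\<^sub>L 'a"
  assumes S: "subspace S" "closed S" and TS: "\<forall>x\<in>S. T x \<in> S"
    and c: "c > 0" and pos: "\<forall>x\<in>S. inner (T x) x \<ge> c * (norm x) ^ 2"
  shows "bij_betw (blinfun_apply T) S S"
proof -
  have inj: "inj_on (blinfun_apply T) S"
  proof (rule inj_onI)
    fix x y assume xy: "x \<in> S" "y \<in> S" "T x = T y"
    have u: "x - y \<in> S" using xy S by (simp add: subspace_diff)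
    have "T (x - y) = 0" using xy by (simp add: blinfun.diff_right)
    then have "c * (norm (x - y)) ^ 2 \<le> 0" using pos u by fastforce
    then have "norm (x - y) = 0" using c by (simp add: mult_le_0_iff)
    then show "x = y" by simp
  qed
  have surj: "y \<in> blinfun_apply T ` S" if y: "y \<in> S" for y
  proof -
    define K where "K = norm T + c + 1"
    have K: "K > 0" "c < K" "norm T \<le> K" using c norm_ge_zero[of T] unfolding K_def by linarith+
    define \<alpha> where "\<alpha> = c / K ^ 2"
    have \<alpha>: "\<alpha> > 0" using c K by (simp add: \<alpha>_def)
    define q where "q = sqrt (1 - c ^ 2 / K ^ 2)"
    have cK: "c ^ 2 / K ^ 2 < 1" using c K by (simp add: power_strict_mono divide_less_eq)
    have cK0: "c ^ 2 / K ^ 2 > 0" using c K by simp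
    have q: "0 \<le> q" "q < 1" using cK cK0 by (auto simp: q_def)
    define f where "f z = z - \<alpha> *\<^sub>R T z + \<alpha> *\<^sub>R y" for z
    have fS: "f ` S \<subseteq> S"
    proof
      fix w assume "w \<in> f ` S"
      then obtain z where z: "z \<in> S" "w = f z" by blast
      have "T z \<in> S" using TS z by blast
      then show "w \<in> S" unfolding z f_def
        by (intro subspace_add[OF S(1)] subspace_diff[OF S(1)] subspace_scale[OF S(1)] z y)
    qed
    have contr: "dist (f z) (f w) \<le> q * dist z w" if "z \<in> S" "w \<in> S" for z w
    proof -
      define u where "u = z - w"
      have e: "f z - f w = u - \<alpha> *\<^sub>R T u" by (simp add: f_def u_def blinfun.diff_right algebra_simps)
      have uS: "u \<in> S" using that S by (simp add: u_def subspace_diff)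
      have p: "inner (T u) u \<ge> c * (norm u) ^ 2" using pos uS by blast
      have Tu: "norm (T u) \<le> K * norm u" using norm_blinfun[of T u] K
        by (meson mult_right_mono norm_ge_zero order_trans)
      have Tu2: "(norm (T u)) ^ 2 \<le> K ^ 2 * (norm u) ^ 2"
        using Tu by (metis norm_ge_zero power_mono power_mult_distrib)
      have "(norm (u - \<alpha> *\<^sub>R T u)) ^ 2 = (norm u)^2 - 2 * \<alpha> * inner (T u) u + \<alpha>^2 * (norm (T u))^2"
        unfolding power2_norm_eq_inner
        by (simp add: inner_diff_left inner_diff_right inner_commute algebra_simps power2_eq_square)
      also have "\<dots> \<le> (norm u)^2 - 2 * \<alpha> * (c * (norm u) ^ 2) + \<alpha>^2 * (K ^ 2 * (norm u) ^ 2)"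
      proof -
        have a: "2 * \<alpha> * (c * (norm u) ^ 2) \<le> 2 * \<alpha> * inner (T u) u"
          using p \<alpha> by (intro mult_left_mono) auto
        have b: "\<alpha>^2 * (norm (T u))^2 \<le> \<alpha>^2 * (K ^ 2 * (norm u) ^ 2)"
          using Tu2 by (intro mult_left_mono) auto
        show ?thesis using a b by linarith
      qed
      also have "\<dots> = (norm u)^2 - 2 * (\<alpha> * c) * (norm u) ^ 2 + (\<alpha>^2 * K ^ 2) * (norm u) ^ 2"
        by (simp only: mult_ac)
      also have "\<dots> = (1 - c ^ 2 / K ^ 2) * (norm u) ^ 2"
      proof -
        have h1: "\<alpha> * c = c ^ 2 / K ^ 2" by (simp add: \<alpha>_def power2_eq_square)
        have h2: "\<alpha> ^ 2 * K ^ 2 = c ^ 2 / K ^ 2" using K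
          by (simp add: \<alpha>_def power_divide power2_eq_square)
        show ?thesis unfolding h1 h2 by (simp add: algebra_simps)
      qed
      also have "\<dots> = (q * norm u) ^ 2"
      proof -
        have "q ^ 2 = 1 - c ^ 2 / K ^ 2" using cK unfolding q_def by (intro real_sqrt_pow2) simp
        then show ?thesis by (simp only: power_mult_distrib)
      qed
      finally have "(norm (u - \<alpha> *\<^sub>R T u)) ^ 2 \<le> (q * norm u) ^ 2" .
      then have "norm (u - \<alpha> *\<^sub>R T u) \<le> q * norm u"
        by (rule power2_le_imp_le) (simp add: q)
      then show ?thesis by (simp add: dist_norm e u_def)
    qed
    have cS: "complete S" using S by (simp add: complete_eq_closed)
    have nS: "S \<noteq> {}" using S(1) subspace_0 by blast
    have "\<exists>!x\<in>S. f x = x" by (rule Banach_fix[OF cS nS q fS contr])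
    then obtain z where z: "z \<in> S" "f z = z" by blast
    then have "T z = y" using \<alpha> by (auto simp: f_def algebra_simps)
    then show ?thesis using z by blast
  qed
  have "blinfun_apply T ` S = S" using TS surj by blast
  then show ?thesis using inj by (simp add: bij_betw_def)
qed

lemma inv_bdd:
  fixes T :: "'a::{real_inner,complete_space} \<Rightarrow>\<^sub>L 'a"
  assumes S: "subspace S" "closed S" and TS: "\<forall>x\<in>S. T x \<in> S"
    and sym: "\<forall>x y. inner (T x) y = inner x (T y)"
    and bij: "bij_betw (blinfun_apply T) S S"
  shows "\<exists>c>0. \<forall>x\<in>S. c * norm x \<le> norm (T x)"
proof -
  define R where "R = inv_into S (blinfun_apply T)"
  have R1: "R y \<in> S" "T (R y) = y" if "y \<in> S" for y
    using that bij unfolding R_def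
    by (auto simp: bij_betw_def inv_into_into f_inv_into_f)
  have inj: "inj_on (blinfun_apply T) S" using bij by (simp add: bij_betw_def)
  have R2: "R (T x) = x" if "x \<in> S" for x
    using inv_into_f_f[OF inj that] by (simp add: R_def)
  have Rsym: "inner (R y) z = inner y (R z)" if "y \<in> S" "z \<in> S" for y z
  proof -
    have "inner (R y) z = inner (R y) (T (R z))" using R1 that by simp
    also have "\<dots> = inner (T (R y)) (R z)" using sym by simp
    also have "\<dots> = inner y (R z)" using R1 that by simp
    finally show ?thesis .
  qed
  have Radd: "R (y + z) = R y + R z" if "y \<in> S" "z \<in> S" for y z
  proof -
    have "T (R y + R z) = y + z" using R1 that by (simp add: blinfun.add_right)
    moreover have "R y + R z \<in> S" using R1 that S by (simp add: subspace_add)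
    ultimately show ?thesis using R2 by metis
  qed
  have Rscale: "R (a *\<^sub>R y) = a *\<^sub>R R y" if "y \<in> S" for y a
  proof -
    have "T (a *\<^sub>R R y) = a *\<^sub>R y" using R1 that by (simp add: blinfun.scaleR_right)
    moreover have "a *\<^sub>R R y \<in> S" using R1 that S by (simp add: subspace_scale)
    ultimately show ?thesis using R2 by metis
  qed
  define F where "F k = {y\<in>S. \<forall>z\<in>S. \<bar>inner y (R z)\<bar> \<le> real k * norm z}" for k :: nat
  have Fiff: "y \<in> F k \<longleftrightarrow> norm (R y) \<le> real k" if y: "y \<in> S" for y k
  proof
    assume "y \<in> F k"
    then have "\<bar>inner y (R (R y))\<bar> \<le> real k * norm (R y)" using R1 y by (auto simp: F_def)
    moreover have "inner y (R (R y)) = (norm (R y))^2"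
      using Rsym[of y "R y"] R1 y by (simp add: power2_norm_eq_inner)
    ultimately have "(norm (R y))^2 \<le> real k * norm (R y)" by simp
    then show "norm (R y) \<le> real k"
      by (cases "norm (R y) = 0") (auto simp: power2_eq_square)
  next
    assume a: "norm (R y) \<le> real k"
    have "\<bar>inner y (R z)\<bar> \<le> real k * norm z" if z: "z \<in> S" for z
    proof -
      have "\<bar>inner y (R z)\<bar> = \<bar>inner (R y) z\<bar>" using Rsym y z by simp
      also have "\<dots> \<le> norm (R y) * norm z" by (rule Cauchy_Schwarz_ineq2)
      also have "\<dots> \<le> real k * norm z" using a by (simp add: mult_right_mono)
      finally show ?thesis .
    qed
    then show "y \<in> F k" using y by (simp add: F_def)
  qed
  have Fsub: "F k \<subseteq> S" for k by (auto simp: F_def)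
  have Fclosed: "closed (F k)" for k
  proof -
    have "F k = S \<inter> (\<Inter>z\<in>S. {y. \<bar>inner y (R z)\<bar> \<le> real k * norm z})"
      by (auto simp: F_def)
    moreover have "closed {y. \<bar>inner y (R z)\<bar> \<le> real k * norm z}" for z
      by (intro closed_Collect_le continuous_intros)
    ultimately show ?thesis using S by (simp add: closed_Int closed_INT)
  qed
  have Fcov: "\<Union>(range F) = S"
  proof
    show "\<Union>(range F) \<subseteq> S" using Fsub by blast
    show "S \<subseteq> \<Union>(range F)"
    proof
      fix y assume y: "y \<in> S"
      have "norm (R y) \<le> real (nat \<lceil>norm (R y)\<rceil>)" by linarith
      then have "y \<in> F (nat \<lceil>norm (R y)\<rceil>)" using Fiff y by blast
      then show "y \<in> \<Union>(range F)" by blast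
    qed
  qed
  have "\<exists>k. top_of_set S interior_of F k \<noteq> {}"
  proof (rule ccontr)
    assume "\<not> ?thesis"
    then have e: "\<And>k. top_of_set S interior_of F k = {}" by blast
    have cm: "completely_metrizable_space (top_of_set S)"
    proof -
      have "closedin euclidean S" using S(2) closed_closedin by blast
      then show ?thesis by (rule completely_metrizable_space_closedin[OF completely_metrizable_space_euclidean])
    qed
    have "top_of_set S interior_of \<Union>(range F) = {}"
    proof -
      have clo: "closedin (top_of_set S) (F k)" for k using closed_subset[OF Fsub Fclosed] .
      show ?thesis by (rule Baire_category_alt) (use cm e clo in auto)
    qed
    moreover have "top_of_set S interior_of S = S"
      using interior_of_topspace[of "top_of_set S"] by simp
    ultimately have "S = {}" using Fcov by simp
    then show False using S(1) subspace_0 by blast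
  qed
  then obtain k where "top_of_set S interior_of F k \<noteq> {}" by blast
  then obtain U where U: "openin (top_of_set S) U" "U \<noteq> {}" "U \<subseteq> F k"
    by (meson interior_of_eq_empty)
  then obtain y0 where y0: "y0 \<in> U" by blast
  obtain \<epsilon> where \<epsilon>: "\<epsilon> > 0" "ball y0 \<epsilon> \<inter> S \<subseteq> U"
    using U(1) y0 openin_contains_ball by metis
  have y0S: "y0 \<in> S" using y0 U(1) openin_subset by fastforce
  have Ry0: "norm (R y0) \<le> real k" using Fiff y0S y0 U(3) by blast
  have small: "norm (R u) \<le> 2 * real k" if u: "u \<in> S" "norm u < \<epsilon>" for u
  proof -
    have "y0 + u \<in> ball y0 \<epsilon> \<inter> S" using u y0S S by (simp add: dist_norm subspace_add)
    then have "y0 + u \<in> F k" using \<epsilon> U by blast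
    then have "norm (R (y0 + u)) \<le> real k" using Fiff y0S u S by (simp add: subspace_add)
    moreover have "R (y0 + u) = R y0 + R u" using Radd y0S u by simp
    ultimately have "norm (R y0 + R u) \<le> real k" by simp
    then show ?thesis using Ry0 norm_triangle_ineq4[of "R y0 + R u" "R y0"] by simp
  qed
  define c where "c = \<epsilon> / (4 * real k + 1)"
  have c: "c > 0" using \<epsilon> by (simp add: c_def add_nonneg_pos)
  have "c * norm x \<le> norm (T x)" if x: "x \<in> S" for x
  proof (cases "x = 0")
    case True then show ?thesis by simp
  next
    case False
    define y where "y = T x"
    have yS: "y \<in> S" using TS x by (simp add: y_def)
    have Ry: "R y = x" using R2 x by (simp add: y_def)
    have y0': "y \<noteq> 0" using Ry False R2 yS
      by (metis blinfun.zero_right)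
    define a where "a = \<epsilon> / (2 * norm y)"
    have a: "a > 0" using \<epsilon> y0' by (simp add: a_def)
    have "norm (a *\<^sub>R y) = \<epsilon> / 2" using y0' a \<epsilon> by (simp add: a_def)
    then have "norm (a *\<^sub>R y) < \<epsilon>" using \<epsilon> by simp
    moreover have "a *\<^sub>R y \<in> S" using yS S by (simp add: subspace_scale)
    ultimately have "norm (R (a *\<^sub>R y)) \<le> 2 * real k" using small by blast
    then have "a * norm x \<le> 2 * real k" using Rscale yS Ry a by simp
    then have "\<epsilon> * norm x \<le> 4 * real k * norm y" using y0' \<epsilon>
      by (simp add: a_def field_simps)
    moreover have "4 * real k * norm y \<le> (4 * real k + 1) * norm y"
      by (intro mult_right_mono) auto
    ultimately have "\<epsilon> * norm x \<le> (4 * real k + 1) * norm y" by linarith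
    then show ?thesis by (simp add: c_def y_def field_simps)
  qed
  then show ?thesis using c by blast
qed

lemma quad_nonneg:
  fixes a b c :: real
  assumes "\<forall>t. a + 2 * t * b + t ^ 2 * c \<ge> 0" "a \<ge> 0" "c \<ge> 0"
  shows "b ^ 2 \<le> a * c"
proof (cases "c = 0")
  case True
  have "b = 0"
  proof (rule ccontr)
    assume b: "b \<noteq> 0"
    have "a + 2 * (- (a + 1) / (2 * b)) * b + (- (a + 1) / (2 * b)) ^ 2 * c \<ge> 0" using assms(1) by blast
    moreover have "2 * (- (a + 1) / (2 * b)) * b = - (a + 1)" using b by simp
    ultimately show False using True by simp
  qed
  then show ?thesis using True by simp
next
  case False
  then have cp: "c > 0" using assms by simp
  have "a + 2 * (- b / c) * b + (- b / c) ^ 2 * c \<ge> 0" using assms(1) by blast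
  moreover have "2 * (- b / c) * b + (- b / c) ^ 2 * c = - (b ^ 2 / c)"
    using cp by (simp add: power2_eq_square field_simps)
  ultimately have "b ^ 2 / c \<le> a" by simp
  then show ?thesis using cp by (simp add: divide_le_eq mult.commute)
qed

lemma pos_CS:
  fixes Q :: "'a::real_inner \<Rightarrow>\<^sub>L 'a"
  assumes S: "subspace S" and QS: "\<forall>x\<in>S. Q x \<in> S"
    and sym: "\<forall>x y. inner (Q x) y = inner x (Q y)"
    and pos: "\<forall>x\<in>S. inner (Q x) x \<ge> 0" and x: "x \<in> S"
  shows "(norm (Q x)) ^ 2 \<le> norm Q * inner (Q x) x"
proof -
  define y where "y = Q x"
  have yS: "y \<in> S" using QS x by (simp add: y_def)
  have "\<forall>t. inner (Q x) x + 2 * t * inner (Q x) y + t ^ 2 * inner (Q y) y \<ge> 0"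
  proof
    fix t
    have "x + t *\<^sub>R y \<in> S" using x yS S by (simp add: subspace_add subspace_scale)
    then have "inner (Q (x + t *\<^sub>R y)) (x + t *\<^sub>R y) \<ge> 0" using pos by blast
    moreover have "inner (Q (x + t *\<^sub>R y)) (x + t *\<^sub>R y)
       = inner (Q x) x + 2 * t * inner (Q x) y + t ^ 2 * inner (Q y) y"
    proof -
      have "inner (Q y) x = inner (Q x) y" using sym by (simp add: inner_commute)
      have "Q (x + t *\<^sub>R y) = Q x + t *\<^sub>R Q y" by (simp add: blinfun.add_right blinfun.scaleR_right)
      then have "inner (Q (x + t *\<^sub>R y)) (x + t *\<^sub>R y)
          = inner (Q x) x + t * inner (Q x) y + t * inner (Q y) x + t * t * inner (Q y) y"
        by (simp add: inner_add_left inner_add_right algebra_simps)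
      then show ?thesis using \<open>inner (Q y) x = inner (Q x) y\<close> by (simp add: power2_eq_square)
    qed
    ultimately show "inner (Q x) x + 2 * t * inner (Q x) y + t ^ 2 * inner (Q y) y \<ge> 0" by simp
  qed
  then have b: "(inner (Q x) y) ^ 2 \<le> inner (Q x) x * inner (Q y) y"
    using quad_nonneg pos x yS by blast
  have e: "inner (Q x) y = (norm y) ^ 2" by (simp add: y_def power2_norm_eq_inner)
  have "inner (Q y) y \<le> norm (Q y) * norm y" by (rule norm_cauchy_schwarz)
  also have "\<dots> \<le> norm Q * norm y * norm y" by (simp add: mult_right_mono norm_blinfun)
  finally have qy: "inner (Q y) y \<le> norm Q * (norm y) ^ 2" by (simp add: power2_eq_square)
  have px: "inner (Q x) x \<ge> 0" using pos x by blast
  have "((norm y) ^ 2) ^ 2 \<le> inner (Q x) x * inner (Q y) y" using b e by simp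
  also have "\<dots> \<le> inner (Q x) x * (norm Q * (norm y) ^ 2)" using qy px by (rule mult_left_mono)
  finally have "((norm y) ^ 2) ^ 2 \<le> inner (Q x) x * (norm Q * (norm y) ^ 2)" .
  then have "(norm y) ^ 2 * (norm y) ^ 2 \<le> (norm Q * inner (Q x) x) * (norm y) ^ 2"
    by (simp add: power2_eq_square algebra_simps)
  then have "(norm y)^2 \<le> norm Q * inner (Q x) x \<or> norm y = 0"
    using mult_right_le_imp_le[of "(norm y)^2" "(norm y)^2" "norm Q * inner (Q x) x"] by fastforce
  then show ?thesis using px by (auto simp: y_def)
qed

lemma spec_inf:
  fixes T :: "'a::{real_inner,complete_space} \<Rightarrow>\<^sub>L 'a"
  assumes S: "subspace S" "closed S" and TS: "\<forall>x\<in>S. T x \<in> S"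
    and sym: "\<forall>x y. inner (T x) y = inner x (T y)" and nz: "\<exists>x\<in>S. x \<noteq> 0"
  shows "Inf (spec_on S (blinfun_apply T)) = Inf ((\<lambda>x. inner (T x) x) ` {x\<in>S. norm x = 1})"
proof -
  define N where "N = (\<lambda>x. inner (T x) x) ` {x\<in>S. norm x = 1}"
  define m where "m = Inf N"
  obtain x0 where x0: "x0 \<in> S" "x0 \<noteq> 0" using nz by blast
  have "(1 / norm x0) *\<^sub>R x0 \<in> {x\<in>S. norm x = 1}" using x0 S by (simp add: subspace_scale)
  then have Nne: "N \<noteq> {}" by (auto simp: N_def)
  have Nbdd: "bdd_below N"
  proof (rule bdd_belowI)
    fix n assume "n \<in> N"
    then obtain x where x: "x \<in> S" "norm x = 1" "n = inner (T x) x" by (auto simp: N_def)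
    have "\<bar>inner (T x) x\<bar> \<le> norm (T x) * norm x" by (rule Cauchy_Schwarz_ineq2)
    also have "\<dots> \<le> norm T" using x norm_blinfun[of T x] by simp
    finally show "- norm T \<le> n" using x by linarith
  qed
  have mle: "m * (norm x) ^ 2 \<le> inner (T x) x" if x: "x \<in> S" for x
  proof (cases "x = 0")
    case True then show ?thesis by simp
  next
    case False
    define u where "u = (1 / norm x) *\<^sub>R x"
    have "u \<in> {x\<in>S. norm x = 1}" using x S False by (simp add: u_def subspace_scale)
    then have "inner (T u) u \<in> N" by (auto simp: N_def)
    then have "m \<le> inner (T u) u" unfolding m_def using Nbdd by (rule cInf_lower)
    also have "inner (T u) u = inner (T x) x / (norm x) ^ 2"
      by (simp add: u_def blinfun.scaleR_right power2_eq_square)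
    finally show ?thesis using False by (simp add: field_simps)
  qed
  define Tl where "Tl l = T - l *\<^sub>R id_blinfun" for l
  have Tl_apply: "blinfun_apply (Tl l) = (\<lambda>x. T x - l *\<^sub>R x)" for l
    by (rule ext) (simp add: Tl_def blinfun.diff_left blinfun.scaleR_left)
  have spec_iff: "l \<in> spec_on S (blinfun_apply T) \<longleftrightarrow> \<not> bij_betw (blinfun_apply (Tl l)) S S" for l
    by (simp add: spec_on_def Tl_apply)
  have TlS: "\<forall>x\<in>S. Tl l x \<in> S" for l
    using TS S by (simp add: Tl_apply subspace_diff subspace_scale)
  have Tlsym: "\<forall>x y. inner (Tl l x) y = inner x (Tl l y)" for l
    using sym by (simp add: Tl_apply inner_diff_left inner_diff_right inner_commute)
  have below: "m \<le> l" if l: "l \<in> spec_on S (blinfun_apply T)" for l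
  proof (rule ccontr)
    assume "\<not> m \<le> l"
    then have c: "m - l > 0" by simp
    have "\<forall>x\<in>S. inner (Tl l x) x \<ge> (m - l) * (norm x) ^ 2"
    proof
      fix x assume "x \<in> S"
      then have "m * (norm x) ^ 2 \<le> inner (T x) x" by (rule mle)
      then show "inner (Tl l x) x \<ge> (m - l) * (norm x) ^ 2"
        by (simp add: Tl_apply inner_diff_left power2_norm_eq_inner algebra_simps)
    qed
    then have "bij_betw (blinfun_apply (Tl l)) S S" using res_bij[OF S TlS c] by blast
    then show False using l spec_iff by blast
  qed
  have mspec: "m \<in> spec_on S (blinfun_apply T)"
  proof (rule ccontr)
    assume "m \<notin> spec_on S (blinfun_apply T)"
    then have bij: "bij_betw (blinfun_apply (Tl m)) S S" using spec_iff by blast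
    define Q where "Q = Tl m"
    obtain c where c: "c > 0" "\<forall>x\<in>S. c * norm x \<le> norm (Q x)"
      using inv_bdd[OF S TlS Tlsym bij] unfolding Q_def by blast
    have pos: "\<forall>x\<in>S. inner (Q x) x \<ge> 0"
    proof
      fix x assume "x \<in> S"
      then have "m * (norm x) ^ 2 \<le> inner (T x) x" by (rule mle)
      then show "inner (Q x) x \<ge> 0"
        by (simp add: Q_def Tl_apply inner_diff_left power2_norm_eq_inner algebra_simps)
    qed
    define \<epsilon> where "\<epsilon> = c ^ 2 / (norm Q + 1)"
    have \<epsilon>: "\<epsilon> > 0" using c by (simp add: \<epsilon>_def add_nonneg_pos)
    have "Inf N < m + \<epsilon>" using \<epsilon> by (simp add: m_def)
    then obtain n where "n \<in> N" "n < m + \<epsilon>" using cInf_less_iff[OF Nne Nbdd] by blast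
    then obtain x where x: "x \<in> S" "norm x = 1" "inner (T x) x < m + \<epsilon>" by (auto simp: N_def)
    have qx: "inner (Q x) x < \<epsilon>"
      using x by (simp add: Q_def Tl_apply inner_diff_left power2_norm_eq_inner[symmetric])
    have "c \<le> norm (Q x)" using c x by force
    then have "c ^ 2 \<le> (norm (Q x)) ^ 2" using c by (intro power_mono) auto
    also have "\<dots> \<le> norm Q * inner (Q x) x"
      using pos_CS[of S Q x] S TlS Tlsym pos x unfolding Q_def by blast
    also have "\<dots> \<le> norm Q * \<epsilon>" using qx by (intro mult_left_mono) auto
    also have "\<dots> < c ^ 2"
    proof -
      have "norm Q * \<epsilon> = c ^ 2 * (norm Q / (norm Q + 1))" by (simp add: \<epsilon>_def)
      also have "\<dots> < c ^ 2 * 1"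
      proof (intro mult_strict_left_mono)
        show "norm Q / (norm Q + 1) < 1" proof -
          have "norm Q + 1 > 0" using norm_ge_zero[of Q] by linarith
          then show ?thesis by (simp add: divide_less_eq)
        qed
      qed (use c in auto)
      finally show ?thesis by simp
    qed
    finally show False by simp
  qed
  have "Inf (spec_on S (blinfun_apply T)) = m" using mspec below by (rule cInf_eq_minimum)
  then show ?thesis by (simp add: m_def N_def)
qed

lemma spec_neg:
  fixes T :: "'a::real_normed_vector \<Rightarrow>\<^sub>L 'a"
  assumes S: "subspace S"
  shows "spec_on S (blinfun_apply (- T)) = uminus ` spec_on S (blinfun_apply T)"
proof -
  have bu: "bij_betw uminus S S"
  proof (rule bij_betwI[of _ _ _ uminus])
    show "uminus \<in> S \<rightarrow> S" using S by (auto simp: subspace_neg)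
  qed (use S in \<open>auto simp: subspace_neg\<close>)
  have iff: "bij_betw g S S \<longleftrightarrow> bij_betw (uminus \<circ> g) S S" for g :: "'a \<Rightarrow> 'a"
  proof
    assume "bij_betw g S S" then show "bij_betw (uminus \<circ> g) S S" using bu by (rule bij_betw_trans)
  next
    assume "bij_betw (uminus \<circ> g) S S"
    then have "bij_betw (uminus \<circ> (uminus \<circ> g)) S S" using bu by (rule bij_betw_trans)
    then show "bij_betw g S S" by (simp add: comp_def)
  qed
  have e: "(\<lambda>x. (- T) x - l *\<^sub>R x) = uminus \<circ> (\<lambda>x. T x - (- l) *\<^sub>R x)" for l
    by (rule ext) (simp add: blinfun.minus_left)
  have "l \<in> spec_on S (blinfun_apply (- T)) \<longleftrightarrow> - l \<in> spec_on S (blinfun_apply T)" for l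
    unfolding spec_on_def mem_Collect_eq e using iff by blast
  then show ?thesis by (force simp: image_iff)
qed

lemma N_bdd:
  fixes T :: "'a::real_inner \<Rightarrow>\<^sub>L 'a"
  shows "bdd_below ((\<lambda>x. inner (T x) x) ` {x\<in>S. norm x = 1})"
proof (rule bdd_belowI)
  fix n assume "n \<in> (\<lambda>x. inner (T x) x) ` {x\<in>S. norm x = 1}"
  then obtain x where x: "x \<in> S" "norm x = 1" "n = inner (T x) x" by auto
  have "\<bar>inner (T x) x\<bar> \<le> norm (T x) * norm x" by (rule Cauchy_Schwarz_ineq2)
  also have "\<dots> \<le> norm T" using x norm_blinfun[of T x] by simp
  finally show "- norm T \<le> n" using x by linarith
qed

lemma quad_lower:
  fixes T :: "'a::real_inner \<Rightarrow>\<^sub>L 'a"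
  assumes S: "subspace S" and x: "x \<in> S"
  shows "Inf ((\<lambda>x. inner (T x) x) ` {x\<in>S. norm x = 1}) * (norm x) ^ 2 \<le> inner (T x) x"
proof (cases "x = 0")
  case True then show ?thesis by simp
next
  case False
  define u where "u = (1 / norm x) *\<^sub>R x"
  have "u \<in> {x\<in>S. norm x = 1}" using x S False by (simp add: u_def subspace_scale)
  then have "inner (T u) u \<in> (\<lambda>x. inner (T x) x) ` {x\<in>S. norm x = 1}" by blast
  then have "Inf ((\<lambda>x. inner (T x) x) ` {x\<in>S. norm x = 1}) \<le> inner (T u) u"
    using N_bdd by (rule cInf_lower)
  also have "inner (T u) u = inner (T x) x / (norm x) ^ 2"
    by (simp add: u_def blinfun.scaleR_right power2_eq_square)
  finally show ?thesis using False by (simp add: field_simps)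
qed

lemma core_inf:
  fixes A V P :: "'a::{real_inner, complete_space} \<Rightarrow>\<^sub>L 'a"
  assumes sA: "self_adjoint A" and sV: "self_adjoint V"
    and oP: "orth_proj P"
    and AP: "\<forall>x. A (P x) = P (A x)"
    and V0: "\<forall>x. P (V (P x)) = 0"
    and V1: "\<forall>x. V (x - P x) - P (V (x - P x)) = 0"
  shows "Inf (spec (A + V)) \<le> Inf (spec A)
     \<and> Inf (spec A) - delta_shift (norm V)
          (Inf (spec_on (range (\<lambda>x. x - P x)) A) - Inf (spec_on (range P) A))
        \<le> Inf (spec (A + V))"
proof (cases "V = 0")
  case True
  then show ?thesis by (simp add: delta_zero)
next
  case False
  have Asym: "\<forall>x y. inner (A x) y = inner x (A y)" using sA by (simp add: self_adjoint_def)
  have Vsym: "\<forall>x y. inner (V x) y = inner x (V y)" using sV by (simp add: self_adjoint_def)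
  have Psym: "\<And>x y. inner (P x) y = inner x (P y)" using oP by (simp add: orth_proj_def self_adjoint_def)
  have PP: "\<And>x. P (P x) = P x" using oP by (simp add: orth_proj_def)
  define S0 where "S0 = range (blinfun_apply P)"
  define S1 where "S1 = range (\<lambda>x. x - P x)"
  have S0c: "S0 = {x. P x = x}"
  proof
    show "S0 \<subseteq> {x. P x = x}" using PP by (auto simp: S0_def)
    show "{x. P x = x} \<subseteq> S0" unfolding S0_def by (metis (mono_tags, lifting) mem_Collect_eq rangeI subsetI)
  qed
  have S1c: "S1 = {x. P x = 0}"
  proof
    show "S1 \<subseteq> {x. P x = 0}" using PP by (auto simp: S1_def blinfun.diff_right)
    show "{x. P x = 0} \<subseteq> S1" unfolding S1_def by (metis (mono_tags, lifting) diff_zero mem_Collect_eq rangeI subsetI)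
  qed
  have contP: "continuous_on UNIV (blinfun_apply P)"
    by (rule linear_continuous_on[OF blinfun.bounded_linear_right])
  have S0s: "subspace S0" unfolding S0c subspace_def
    by (simp add: blinfun.add_right blinfun.scaleR_right)
  have S1s: "subspace S1" unfolding S1c subspace_def
    by (simp add: blinfun.add_right blinfun.scaleR_right)
  have S0cl: "closed S0" unfolding S0c by (intro closed_Collect_eq contP continuous_on_id)
  have S1cl: "closed S1" unfolding S1c by (intro closed_Collect_eq contP continuous_on_const)
  obtain v where v: "V v \<noteq> 0" using False by (metis blinfun_eqI blinfun.zero_left)
  have S0nz: "\<exists>x\<in>S0. x \<noteq> 0"
  proof (rule ccontr)
    assume "\<not> ?thesis"
    then have "\<And>x. P x = 0" unfolding S0_def by blast
    then have "V v = 0" using V1 by (metis diff_zero)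
    then show False using v by simp
  qed
  have S1nz: "\<exists>x\<in>S1. x \<noteq> 0"
  proof (rule ccontr)
    assume "\<not> ?thesis"
    then have Pid: "\<And>x. P x = x" unfolding S1_def by (metis rangeI right_minus_eq)
    then have "V v = 0" using V0 by (simp add: Pid)
    then show False using v by simp
  qed
  have AS0: "\<forall>x\<in>S0. A x \<in> S0" unfolding S0c by (auto simp: AP[rule_format, symmetric])
  have AS1: "\<forall>x\<in>S1. A x \<in> S1" unfolding S1c by (auto simp: AP[rule_format, symmetric])
  define B where "B = A + V"
  have Bapp: "\<And>x. B x = A x + V x" by (simp add: B_def blinfun.add_left)
  have Bsym: "\<forall>x y. inner (B x) y = inner x (B y)"
    using Asym Vsym by (simp add: Bapp inner_add_left inner_add_right)
  have Unz: "\<exists>x\<in>(UNIV::'a set). x \<noteq> 0" using S0nz by blast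
  define q where "q T S = Inf ((\<lambda>x. inner (blinfun_apply T x) x) ` {x\<in>S. norm x = 1})"
    for T :: "'a \<Rightarrow>\<^sub>L 'a" and S
  have specA: "Inf (spec A) = q A UNIV" unfolding spec_def q_def
    by (rule spec_inf) (use Asym Unz in auto)
  have specB: "Inf (spec (A + V)) = q B UNIV" unfolding spec_def q_def B_def[symmetric]
    by (rule spec_inf) (use Bsym Unz in auto)
  have specA0: "Inf (spec_on (range P) A) = q A S0" unfolding q_def S0_def[symmetric]
    by (rule spec_inf[OF S0s S0cl AS0 Asym S0nz])
  have specA1: "Inf (spec_on (range (\<lambda>x. x - P x)) A) = q A S1" unfolding q_def S1_def[symmetric]
    by (rule spec_inf[OF S1s S1cl AS1 Asym S1nz])
  define a where "a = q A UNIV"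
  define b where "b = q B UNIV"
  define a0 where "a0 = q A S0"
  define a1 where "a1 = q A S1"
  have lowA0: "a0 * (norm x) ^ 2 \<le> inner (A x) x" if "x \<in> S0" for x
    unfolding a0_def q_def by (rule quad_lower[OF S0s that])
  have lowA1: "a1 * (norm x) ^ 2 \<le> inner (A x) x" if "x \<in> S1" for x
    unfolding a1_def q_def by (rule quad_lower[OF S1s that])
  have ne: "(\<lambda>x. inner (blinfun_apply T x) x) ` {x\<in>S. norm x = 1} \<noteq> {}"
    if Ss: "subspace S" and Snz: "\<exists>x\<in>S. x \<noteq> 0" for T :: "'a \<Rightarrow>\<^sub>L 'a" and S
  proof -
    obtain x0 where x0: "x0 \<in> S" "x0 \<noteq> 0" using Snz by blast
    have "(1 / norm x0) *\<^sub>R x0 \<in> {x\<in>S. norm x = 1}" using x0 Ss by (simp add: subspace_scale)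
    then show ?thesis by blast
  qed
  have dec: "inner (A x) x = inner (A (P x)) (P x) + inner (A (x - P x)) (x - P x)
      \<and> inner (V x) x = 2 * inner (V (P x)) (x - P x)
      \<and> (norm x) ^ 2 = (norm (P x)) ^ 2 + (norm (x - P x)) ^ 2" for x
  proof -
    define x0 where "x0 = P x"
    define x1 where "x1 = x - P x"
    have xe: "x = x0 + x1" by (simp add: x0_def x1_def)
    have Px1: "P x1 = 0" by (simp add: x1_def blinfun.diff_right PP)
    have o1: "inner (A x0) x1 = 0"
    proof -
      have "inner (A x0) x1 = inner (P (A x)) x1" by (simp add: x0_def AP)
      also have "\<dots> = inner (A x) (P x1)" by (rule Psym)
      finally show ?thesis by (simp add: Px1)
    qed
    have o2: "inner (A x1) x0 = 0" using o1 Asym by (simp add: inner_commute)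
    have v0: "inner (V x0) x0 = 0"
    proof -
      have "inner (V x0) x0 = inner (P (V (P x))) x" by (simp add: x0_def Psym)
      then show ?thesis using V0 by simp
    qed
    have v1: "inner (V x1) x1 = 0"
    proof -
      have "V x1 = P (V x1)" using V1 by (simp add: x1_def)
      then have "inner (V x1) x1 = inner (P (V x1)) x1" by simp
      also have "\<dots> = inner (V x1) (P x1)" by (rule Psym)
      finally show ?thesis by (simp add: Px1)
    qed
    have v2: "inner (V x1) x0 = inner (V x0) x1" using Vsym by (simp add: inner_commute)
    have o3: "inner x0 x1 = 0"
    proof -
      have "inner x0 x1 = inner x (P x1)" by (simp add: x0_def Psym)
      then show ?thesis by (simp add: Px1)
    qed
    have "inner (A x) x = inner (A x0) x0 + inner (A x1) x1"
      unfolding xe using o1 o2 by (simp add: blinfun.add_right inner_add_left inner_add_right)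
    moreover have "inner (V x) x = 2 * inner (V x0) x1"
      unfolding xe using v0 v1 v2 by (simp add: blinfun.add_right inner_add_left inner_add_right)
    moreover have "(norm x) ^ 2 = (norm x0) ^ 2 + (norm x1) ^ 2"
      unfolding xe power2_norm_eq_inner using o3 by (simp add: inner_add_left inner_add_right inner_commute)
    ultimately show ?thesis by (simp add: x0_def x1_def)
  qed
  have a_le0: "a \<le> a0"
  proof -
    have "a \<le> y" if "y \<in> (\<lambda>x. inner (A x) x) ` {x\<in>S0. norm x = 1}" for y
      using that unfolding a_def q_def by (intro cInf_lower N_bdd) auto
    then show ?thesis unfolding a0_def q_def by (intro cInf_greatest ne S0s S0nz) auto
  qed
  have a_le1: "a \<le> a1"
  proof -
    have "a \<le> y" if "y \<in> (\<lambda>x. inner (A x) x) ` {x\<in>S1. norm x = 1}" for y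
      using that unfolding a_def q_def by (intro cInf_lower N_bdd) auto
    then show ?thesis unfolding a1_def q_def by (intro cInf_greatest ne S1s S1nz) auto
  qed
  have P0: "P x \<in> S0" for x by (simp add: S0_def)
  have P1: "x - P x \<in> S1" for x by (simp add: S1_def)
  have a_ge: "min a0 a1 \<le> a"
  proof -
    have "min a0 a1 \<le> inner (A x) x" if "norm x = 1" for x
    proof -
      have "min a0 a1 * (norm x) ^ 2 = min a0 a1 * (norm (P x)) ^ 2 + min a0 a1 * (norm (x - P x)) ^ 2"
        using dec[of x] by (simp add: algebra_simps)
      also have "\<dots> \<le> a0 * (norm (P x)) ^ 2 + a1 * (norm (x - P x)) ^ 2"
        by (intro add_mono mult_right_mono) auto
      also have "\<dots> \<le> inner (A x) x" using dec[of x] add_mono[OF lowA0[OF P0[of x]] lowA1[OF P1[of x]]] by simp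
      finally show ?thesis using that by simp
    qed
    then show ?thesis unfolding a_def q_def by (intro cInf_greatest ne subspace_UNIV Unz) auto
  qed
  have b_le0: "b \<le> a0"
  proof -
    have "b \<le> y" if yin: "y \<in> (\<lambda>x. inner (A x) x) ` {x\<in>S0. norm x = 1}" for y
    proof -
      obtain x where x: "x \<in> S0" "norm x = 1" "y = inner (A x) x" using yin by blast
      have "inner (V x) x = 0" using dec[of x] x(1) by (simp add: S0c)
      then have "y = inner (B x) x" using x by (simp add: Bapp inner_add_left)
      then show ?thesis using x unfolding b_def q_def by (intro cInf_lower N_bdd) auto
    qed
    then show ?thesis unfolding a0_def q_def by (intro cInf_greatest ne S0s S0nz) auto
  qed
  have b_le1: "b \<le> a1"
  proof -
    have "b \<le> y" if yin: "y \<in> (\<lambda>x. inner (A x) x) ` {x\<in>S1. norm x = 1}" for y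
    proof -
      obtain x where x: "x \<in> S1" "norm x = 1" "y = inner (A x) x" using yin by blast
      have "inner (V x) x = 0" using dec[of x] x(1) by (simp add: S1c)
      then have "y = inner (B x) x" using x by (simp add: Bapp inner_add_left)
      then show ?thesis using x unfolding b_def q_def by (intro cInf_lower N_bdd) auto
    qed
    then show ?thesis unfolding a1_def q_def by (intro cInf_greatest ne S1s S1nz) auto
  qed
  have lower: "a - delta_shift (norm V) (a1 - a0) \<le> b"
  proof -
    have "a - delta_shift (norm V) (a1 - a0) \<le> inner (B x) x" if "norm x = 1" for x
    proof -
      define s where "s = norm (P x)"
      define t where "t = norm (x - P x)"
      define w where "w = inner (V (P x)) (x - P x)"
      have w: "abs w \<le> norm V * s * t"
      proof -
        have "abs w \<le> norm (V (P x)) * t" unfolding w_def t_def by (rule Cauchy_Schwarz_ineq2)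
        also have "\<dots> \<le> norm V * s * t" unfolding s_def t_def
          by (intro mult_right_mono norm_blinfun) auto
        finally show ?thesis .
      qed
      have st: "s ^ 2 + t ^ 2 = 1" using dec[of x] that by (simp add: s_def t_def)
      have "(min a0 a1 - delta_shift (norm V) (a1 - a0)) * (s ^ 2 + t ^ 2)
          \<le> a0 * s ^ 2 + a1 * t ^ 2 + 2 * w"
        using w by (intro quad_ineq) (auto simp: s_def t_def)
      also have "\<dots> \<le> inner (B x) x"
        using dec[of x] add_mono[OF lowA0[OF P0[of x]] lowA1[OF P1[of x]]]
        by (simp add: Bapp inner_add_left s_def t_def w_def)
      finally show ?thesis using st a_le0 a_le1 by simp
    qed
    then show ?thesis unfolding b_def q_def by (intro cInf_greatest ne subspace_UNIV Unz) auto
  qed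
  have "b \<le> a" using b_le0 b_le1 a_ge by linarith
  then show ?thesis using lower
    by (simp add: specA specB specA0 specA1 a_def b_def a0_def a1_def B_def)
qed

lemma Sup_via_neg: "Sup (X::real set) = - Inf (uminus ` X)"
  by (simp add: Inf_real_def image_image)

theorem lemma1p1:
  fixes A V P :: "'a::{real_inner, complete_space} \<Rightarrow>\<^sub>L 'a"
  assumes "self_adjoint A" and "self_adjoint V"
    and "orth_proj P"
    and "\<forall>x. A (P x) = P (A x)"
    and "\<forall>x. P (V (P x)) = 0"
    and "\<forall>x. V (x - P x) - P (V (x - P x)) = 0"
  shows "Inf (spec (A + V)) \<le> Inf (spec A)
     \<and> Inf (spec A) - delta_shift (norm V)
          (Inf (spec_on (range (\<lambda>x. x - P x)) A) - Inf (spec_on (range P) A))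
        \<le> Inf (spec (A + V))
     \<and> Sup (spec A) \<le> Sup (spec (A + V))
     \<and> Sup (spec (A + V)) \<le> Sup (spec A) + delta_shift (norm V)
          (Sup (spec_on (range (\<lambda>x. x - P x)) A) - Sup (spec_on (range P) A))"
proof -
  note c1 = core_inf[OF assms]
  have n1: "self_adjoint (- A)" using assms(1) by (simp add: self_adjoint_def blinfun.minus_left)
  have n2: "self_adjoint (- V)" using assms(2) by (simp add: self_adjoint_def blinfun.minus_left)
  have n4: "\<forall>x. (- A) (P x) = P ((- A) x)" using assms(4) by (simp add: blinfun.minus_left blinfun.minus_right)
  have n5: "\<forall>x. P ((- V) (P x)) = 0" using assms(5) by (simp add: blinfun.minus_left blinfun.minus_right)
  have n6: "\<forall>x. (- V) (x - P x) - P ((- V) (x - P x)) = 0"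
    using assms(6) by (simp add: blinfun.minus_left blinfun.minus_right)
  note c2 = core_inf[OF n1 n2 assms(3) n4 n5 n6]
  have sub0: "subspace (range (blinfun_apply P))"
    unfolding subspace_def
  proof (intro conjI ballI allI)
    show "0 \<in> range (blinfun_apply P)" by (metis blinfun.zero_right rangeI)
  next
    fix x y assume "x \<in> range (blinfun_apply P)" "y \<in> range (blinfun_apply P)"
    then obtain a b where "x = P a" "y = P b" by blast
    then have "x + y = P (a + b)" by (simp add: blinfun.add_right)
    then show "x + y \<in> range (blinfun_apply P)" by simp
  next
    fix c x assume "x \<in> range (blinfun_apply P)"
    then obtain a where "x = P a" by blast
    then have "c *\<^sub>R x = P (c *\<^sub>R a)" by (simp add: blinfun.scaleR_right)
    then show "c *\<^sub>R x \<in> range (blinfun_apply P)" by simp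
  qed
  have sub1: "subspace (range (\<lambda>x. x - P x))"
    unfolding subspace_def
  proof (intro conjI ballI allI)
    have "0 = 0 - P 0" by simp
    then show "0 \<in> range (\<lambda>x. x - P x)" by blast
  next
    fix x y assume "x \<in> range (\<lambda>x. x - P x)" "y \<in> range (\<lambda>x. x - P x)"
    then obtain a b where "x = a - P a" "y = b - P b" by blast
    then have "x + y = (a + b) - P (a + b)" by (simp add: blinfun.add_right algebra_simps)
    then show "x + y \<in> range (\<lambda>x. x - P x)" by blast
  next
    fix c x assume "x \<in> range (\<lambda>x. x - P x)"
    then obtain a where "x = a - P a" by blast
    then have "c *\<^sub>R x = c *\<^sub>R a - P (c *\<^sub>R a)" by (simp add: blinfun.scaleR_right scaleR_diff_right)
    then show "c *\<^sub>R x \<in> range (\<lambda>x. x - P x)" by blast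
  qed
  have neg: "Inf (spec_on S (blinfun_apply (- T))) = - Sup (spec_on S (blinfun_apply T))"
    if "subspace S" for S and T :: "'a \<Rightarrow>\<^sub>L 'a"
    using spec_neg[OF that, of T] by (simp add: Sup_via_neg)
  have e: "- A + - V = - (A + V)" by simp
  have i1: "Inf (spec (- A)) = - Sup (spec A)" unfolding spec_def by (rule neg) simp
  have i2: "Inf (spec (- (A + V))) = - Sup (spec (A + V))" unfolding spec_def by (rule neg) simp
  have i3: "Inf (spec_on (range P) (- A)) = - Sup (spec_on (range P) A)" by (rule neg[OF sub0])
  have i4: "Inf (spec_on (range (\<lambda>x. x - P x)) (- A)) = - Sup (spec_on (range (\<lambda>x. x - P x)) A)"
    by (rule neg[OF sub1])
  have c2': "- Sup (spec (A + V)) \<le> - Sup (spec A) \<and>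
      - Sup (spec A) - delta_shift (norm V)
        (- Sup (spec_on (range (\<lambda>x. x - P x)) A) - - Sup (spec_on (range P) A))
      \<le> - Sup (spec (A + V))"
    using c2 unfolding e i1 i2 i3 i4 by simp
  have d: "delta_shift (norm V) (- Sup (spec_on (range (\<lambda>x. x - P x)) A) - - Sup (spec_on (range P) A))
     = delta_shift (norm V) (Sup (spec_on (range (\<lambda>x. x - P x)) A) - Sup (spec_on (range P) A))"
    using delta_neg[of "norm V" "Sup (spec_on (range (\<lambda>x. x - P x)) A) - Sup (spec_on (range P) A)"]
    by simp
  show ?thesis using c1 c2' d by linarith
qed

end
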